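(* Let $A \subset \mathbb{Z}$ be a finite set with $\min A = 0$, $\max A = b$, and $\gcd A = 1$. Let $\mathcal{C}_A = \{\sum_{a \in A} n_a (a,1) : n_a \in \mathbb{N}\} \subset \mathbb{Z}^2$, $\Lambda = \{(bn, m+n) : m,n \in \mathbb{Z}\}$, and $\Lambda^+ = \{(bn, m+n) : m,n \in \mathbb{N}\}$. For $a \in \{0,\ldots,b-1\}$ let $\mathcal{S}_a$ be the set of points of $\mathcal{C}_A$ congruent to $(a,1)$ modulo $\Lambda$, let $(g_a,h_a) \in \mathbb{N}^2$ be the unique point such that $\mathcal{S}_a \subseteq (g_a,h_a) + \Lambda^+$ and $E_a := ((g_a,h_a) + \Lambda^+) \setminus \mathcal{S}_a$ is finite. Then every $(n,h) \in E_a$ satisfies $h \leq 2b - 5$.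
   Context: $\mathbb{N} = \{0,1,2,\ldots\}$. The existence and uniqueness of $(g_a,h_a)$ as described is part of the setting (it is proved in the paper). *)

theory Defs
  imports Main
begin

definition coneA :: "int set \<Rightarrow> (int \<times> int) set" where
  "coneA A = {(\<Sum>a\<in>A. int (n a) * a, \<Sum>a\<in>A. int (n a)) | n :: int \<Rightarrow> nat. True}"

definition lat :: "int \<Rightarrow> (int \<times> int) set" where
  "lat b = {(b * n, m + n) | m n :: int. True}"

definition lat_pos :: "int \<Rightarrow> (int \<times> int) set" where
  "lat_pos b = {(b * int n, int m + int n) | m n :: nat. True}"

definition shifted_lat_pos :: "int \<Rightarrow> int \<times> int \<Rightarrow> (int \<times> int) set" where
  "shifted_lat_pos b p = {(fst p + x, snd p + y) | x y. (x, y) \<in> lat_pos b}"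

definition S_set :: "int set \<Rightarrow> int \<Rightarrow> int \<Rightarrow> (int \<times> int) set" where
  "S_set A b a = {p \<in> coneA A. (fst p - a, snd p - 1) \<in> lat b}"

end

theory Submission
  imports Defs "HOL-Library.Multiset"
begin

lemma cone_of_mset:
  assumes "finite A" "set_mset M \<subseteq> A"
  shows "(sum_mset M, int (size M)) \<in> coneA A"
  using assms(2)
proof (induction M)
  case empty
  show ?case unfolding coneA_def by (rule CollectI, rule exI[of _ "\<lambda>_. 0"]) simp
next
  case (add x M)
  then obtain n where n: "sum_mset M = (\<Sum>a\<in>A. int (n a) * a)" "int (size M) = (\<Sum>a\<in>A. int (n a))"
    unfolding coneA_def by auto
  have xA: "x \<in> A" using add by auto
  define n' where "n' = (\<lambda>a. n a + (if a = x then 1 else 0))"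
  have "(\<Sum>a\<in>A. int (n' a) * a) = (\<Sum>a\<in>A. int (n a) * a) + (\<Sum>a\<in>A. (if a = x then x else 0))"
    unfolding sum.distrib[symmetric] by (rule sum.cong) (auto simp: n'_def algebra_simps)
  also have "\<dots> = sum_mset (add_mset x M)" using xA assms(1) n by simp
  finally have 1: "(\<Sum>a\<in>A. int (n' a) * a) = sum_mset (add_mset x M)" .
  have "(\<Sum>a\<in>A. int (n' a)) = (\<Sum>a\<in>A. int (n a)) + (\<Sum>a\<in>A. (if a = x then 1 else 0))"
    unfolding sum.distrib[symmetric] by (rule sum.cong) (auto simp: n'_def)
  also have "\<dots> = int (size (add_mset x M))" using xA assms(1) n by simp
  finally have 2: "(\<Sum>a\<in>A. int (n' a)) = int (size (add_mset x M))" .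
  show ?case unfolding coneA_def
    by (rule CollectI, rule exI[of _ n']) (simp add: 1 2)
qed

lemma mset_of_cone:
  assumes "finite A" "p \<in> coneA A"
  shows "\<exists>M. set_mset M \<subseteq> A \<and> sum_mset M = fst p \<and> int (size M) = snd p"
proof -
  obtain n where p: "p = (\<Sum>a\<in>A. int (n a) * a, \<Sum>a\<in>A. int (n a))"
    using assms(2) unfolding coneA_def by auto
  define M where "M = (\<Sum>a\<in>A. replicate_mset (n a) a)"
  have "set_mset M \<subseteq> A" unfolding M_def using assms(1) by (induction A rule: finite_induct) auto
  moreover have "sum_mset M = (\<Sum>a\<in>A. int (n a) * a)" unfolding M_def using assms(1)
    by (induction A rule: finite_induct) auto
  moreover have "int (size M) = (\<Sum>a\<in>A. int (n a))" unfolding M_def using assms(1)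
    by (induction A rule: finite_induct) auto
  ultimately show ?thesis using p by auto
qed

lemma zero_sum_list:
  fixes xs :: "int list" and b :: int
  assumes "b \<ge> 1" "length xs \<ge> nat b"
  shows "\<exists>i j. i < j \<and> j \<le> length xs \<and> b dvd sum_list (drop i (take j xs))"
proof -
  define f where "f i = sum_list (take i xs) mod b" for i
  have "\<not> inj_on f {0..nat b}"
  proof
    assume inj: "inj_on f {0..nat b}"
    have "f ` {0..nat b} \<subseteq> {0..<b}" unfolding f_def using assms(1) by auto
    hence "card (f ` {0..nat b}) \<le> card {0..<b}" by (intro card_mono) auto
    thus False using card_image[OF inj] by simp
  qed
  then obtain i j where ij: "i \<in> {0..nat b}" "j \<in> {0..nat b}" "i \<noteq> j" "f i = f j"
    unfolding inj_on_def by blast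
  have key: "b dvd sum_list (drop i (take j xs))" if "i < j" "f i = f j" for i j
  proof -
    have "take j xs = take i xs @ drop i (take j xs)"
      using that by (metis append_take_drop_id min.absorb1 less_imp_le take_take)
    hence "sum_list (take j xs) = sum_list (take i xs) + sum_list (drop i (take j xs))"
      by (metis sum_list_append)
    thus ?thesis using that(2) unfolding f_def by (metis add_diff_cancel_left' mod_eq_dvd_iff)
  qed
  show ?thesis
  proof (cases "i < j")
    case True thus ?thesis using key ij assms by (intro exI[of _ i] exI[of _ j]) auto
  next
    case False thus ?thesis using key[of j i] ij assms by (intro exI[of _ j] exI[of _ i]) auto
  qed
qed

lemma sum_mset_bounds:
  fixes Q :: "int multiset"
  assumes "set_mset Q \<subseteq> {l..u}"
  shows "l * int (size Q) \<le> sum_mset Q \<and> sum_mset Q \<le> u * int (size Q)"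
  using assms by (induction Q) (auto simp: algebra_simps)


lemma zero_sum_mset:
  fixes P :: "int multiset" and b :: int
  assumes "b \<ge> 1" "size P \<ge> nat b"
  shows "\<exists>Q. Q \<subseteq># P \<and> Q \<noteq> {#} \<and> b dvd sum_mset Q"
proof -
  obtain xs where xs: "mset xs = P" using ex_mset by blast
  have "length xs \<ge> nat b" using xs assms(2) by (metis size_mset)
  then obtain i j where ij: "i < j" "j \<le> length xs" "b dvd sum_list (drop i (take j xs))"
    using zero_sum_list[OF assms(1)] by blast
  have tj: "take j xs = take i xs @ drop i (take j xs)"
    using ij by (metis append_take_drop_id min.absorb1 less_imp_le take_take)
  have "mset (drop i (take j xs)) \<subseteq># mset (take j xs)"
    by (subst tj) simp
  also have "mset (take j xs) \<subseteq># mset xs"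
    by (metis append_take_drop_id mset_append mset_subset_eq_add_left)
  finally have "mset (drop i (take j xs)) \<subseteq># P" using xs by simp
  moreover have "drop i (take j xs) \<noteq> []" using ij by simp
  ultimately show ?thesis using ij(3)
    by (intro exI[of _ "mset (drop i (take j xs))"]) (simp add: sum_mset_sum_list)
qed

lemma reduce:
  fixes A :: "int set" and b :: int
  assumes b: "b \<ge> 1" and AB: "A \<subseteq> {0..b}" and A0: "0 \<in> A" and Ab: "b \<in> A"
  shows "set_mset M \<subseteq> A \<Longrightarrow> \<exists>M'. set_mset M' \<subseteq> A \<and> sum_mset M' = sum_mset M \<and> size M' = size M
     \<and> size (filter_mset (\<lambda>x. 0 < x \<and> x < b) M') < nat b"
proof (induction "size (filter_mset (\<lambda>x. 0 < x \<and> x < b) M)" arbitrary: M rule: less_induct)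
  case less
  let ?mid = "\<lambda>x::int. 0 < x \<and> x < b"
  show ?case
  proof (cases "size (filter_mset ?mid M) < nat b")
    case True thus ?thesis using less.prems by blast
  next
    case False
    then obtain Q where Q: "Q \<subseteq># filter_mset ?mid M" "Q \<noteq> {#}" "b dvd sum_mset Q"
      using zero_sum_mset[OF b, of "filter_mset ?mid M"] by auto
    have Qmid: "set_mset Q \<subseteq> {1..b-1}"
    proof
      fix x assume "x \<in># Q"
      hence "x \<in># filter_mset ?mid M" using Q(1) by (rule mset_subset_eqD[rotated])
      thus "x \<in> {1..b-1}" by simp
    qed
    have sz: "size Q \<ge> 1" using Q(2) by (cases Q) auto
    obtain t where t: "sum_mset Q = b * t" using Q(3) by auto
    have bnd: "1 * int (size Q) \<le> sum_mset Q \<and> sum_mset Q \<le> (b - 1) * int (size Q)"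
      by (rule sum_mset_bounds[OF Qmid])
    have t1: "t \<ge> 1"
    proof (rule ccontr)
      assume "\<not> t \<ge> 1" hence "b * t \<le> 0" using b by (simp add: mult_nonneg_nonpos)
      thus False using bnd sz t by simp
    qed
    have t2: "t < int (size Q)"
    proof (rule ccontr)
      assume "\<not> t < int (size Q)"
      hence "b * t \<ge> b * int (size Q)" using b by (intro mult_left_mono) auto
      moreover have "int (size Q) \<ge> 1" using sz by simp
      ultimately show False using bnd t by (simp add: algebra_simps)
    qed
    have "Q \<subseteq># M" using Q(1) by (meson multiset_filter_subset subset_mset.trans)
    then obtain C where C: "M = Q + C" by (auto simp: mset_subset_eq_exists_conv)
    define M' where "M' = C + replicate_mset (nat t) b + replicate_mset (size Q - nat t) 0"
    have setM': "set_mset M' \<subseteq> A" using less.prems A0 Ab C unfolding M'_def by auto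
    have sumM': "sum_mset M' = sum_mset M" using C t t1 unfolding M'_def by simp
    have sizeM': "size M' = size M" using C t2 unfolding M'_def by simp
    have fQ: "filter_mset ?mid Q = Q" unfolding filter_mset_eq_conv using Qmid by auto
    have fM': "filter_mset ?mid M' = filter_mset ?mid C" unfolding M'_def
      by simp
    have "size (filter_mset ?mid M') < size (filter_mset ?mid M)"
      using fM' fQ C sz by simp
    from less.hyps[OF this setM'] show ?thesis using sumM' sizeM' by metis
  qed
qed


lemma decomp:
  fixes M :: "int multiset" and b :: int
  assumes "b \<ge> 1" "set_mset M \<subseteq> {0..b}"
  shows "M = filter_mset (\<lambda>x. 0 < x \<and> x < b) M + replicate_mset (count M b) b + replicate_mset (count M 0) 0"
proof (rule multiset_eqI)
  fix x
  show "count M x = count (filter_mset (\<lambda>x. 0 < x \<and> x < b) M + replicate_mset (count M b) b + replicate_mset (count M 0) 0) x"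
  proof (cases "x \<in># M")
    case True
    hence "0 \<le> x \<and> x \<le> b" using assms(2) by auto
    thus ?thesis using assms(1) by auto
  next
    case False
    thus ?thesis using assms(1) by (auto simp: count_eq_zero_iff)
  qed
qed

lemma shifted_mem:
  "(g + b * int i, h + int m + int i) \<in> shifted_lat_pos b (g, h)"
  unfolding shifted_lat_pos_def lat_pos_def by force

lemma shifted_memD:
  "p \<in> shifted_lat_pos b (g, h) \<Longrightarrow> \<exists>i m. p = (g + b * int i, h + int m + int i)"
  unfolding shifted_lat_pos_def lat_pos_def by force

lemma inf_image:
  assumes "inj (f :: nat \<Rightarrow> 'a)" "range f \<subseteq> E" "finite E"
  shows False
  using assms finite_imageD finite_subset infinite_UNIV_nat by metis

theorem corollary5p3:
  fixes A :: "int set" and b a g h :: int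
  assumes "finite A" and "A \<noteq> {}"
    and "Min A = 0" and "Max A = b" and "Gcd A = 1"
    and "0 \<le> a" and "a < b"
    and "0 \<le> g" and "0 \<le> h"
    and "S_set A b a \<subseteq> shifted_lat_pos b (g, h)"
    and "finite (shifted_lat_pos b (g, h) - S_set A b a)"
  shows "\<forall>(n, k) \<in> shifted_lat_pos b (g, h) - S_set A b a. k \<le> 2 * b - 5"
proof -
  let ?mid = "\<lambda>x::int. 0 < x \<and> x < b"
  let ?E = "shifted_lat_pos b (g, h) - S_set A b a"
  have b1: "b \<ge> 1" using assms by simp
  have A0: "0 \<in> A" using assms Min_in by metis
  have Ab: "b \<in> A" using assms Max_in by metis
  have AB: "A \<subseteq> {0..b}" using assms Min_le Max_ge by fastforce
  have "\<exists>j::nat. (g, h + int j) \<in> S_set A b a"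
  proof (rule ccontr)
    assume "\<not> ?thesis"
    hence "range (\<lambda>j::nat. (g, h + int j)) \<subseteq> ?E"
      using shifted_mem[of g b 0 h] by auto
    moreover have "inj (\<lambda>j::nat. (g, h + int j))" by (auto simp: inj_def)
    ultimately show False using inf_image assms(11) by blast
  qed
  then obtain j :: nat where j: "(g, h + int j) \<in> S_set A b a" by blast
  then obtain t where t: "g - a = b * t" unfolding S_set_def lat_def by auto
  have jc: "(g, h + int j) \<in> coneA A" using j unfolding S_set_def by auto
  show ?thesis
  proof (clarify)
    fix n k assume nk: "(n, k) \<in> shifted_lat_pos b (g, h)" "(n, k) \<notin> S_set A b a"
    obtain i m where im: "n = g + b * int i" "k = h + int m + int i"
      using shifted_memD[OF nk(1)] by auto
    show "k \<le> 2 * b - 5"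
    proof (rule ccontr)
      assume kbig: "\<not> k \<le> 2 * b - 5"
      have "(n - a, k - 1) \<in> lat b" unfolding lat_def
        by (rule CollectI, rule exI[of _ "k - 1 - (t + int i)"], rule exI[of _ "t + int i"])
           (use t in \<open>simp add: im algebra_simps\<close>, linarith?)
      hence notc: "(n, k) \<notin> coneA A" using nk(2) unfolding S_set_def by auto
      have "\<exists>M::nat. (n + b * int (M + 1), k + int (M + 1)) \<in> S_set A b a"
      proof (rule ccontr)
        assume "\<not> ?thesis"
        moreover have "(n + b * int (M + 1), k + int (M + 1)) \<in> shifted_lat_pos b (g, h)" for M
          using shifted_mem[of g b "i + M + 1" h m] by (simp add: im algebra_simps)
        ultimately have "range (\<lambda>M::nat. (n + b * int (M + 1), k + int (M + 1))) \<subseteq> ?E" by auto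
        moreover have "inj (\<lambda>M::nat. (n + b * int (M + 1), k + int (M + 1)))" by (auto simp: inj_def)
        ultimately show False using inf_image assms(11) by blast
      qed
      then obtain M0 :: nat where M0: "(n + b * int (M0 + 1), k + int (M0 + 1)) \<in> coneA A"
        unfolding S_set_def by auto
      define MM where "MM = M0 + 1"
      have MM1: "MM \<ge> 1" unfolding MM_def by simp
      obtain N1 where N1: "set_mset N1 \<subseteq> A" "sum_mset N1 = n + b * int MM" "int (size N1) = k + int MM"
        using mset_of_cone[OF assms(1) M0] unfolding MM_def by auto
      obtain N2 where N2: "set_mset N2 \<subseteq> A" "sum_mset N2 = n + b * int MM" "int (size N2) = k + int MM"
        "size (filter_mset ?mid N2) < nat b"
        using reduce[OF b1 AB A0 Ab N1(1)] N1 by auto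
      have dec2: "N2 = filter_mset ?mid N2 + replicate_mset (count N2 b) b + replicate_mset (count N2 0) 0"
        using decomp[OF b1] N2(1) AB by blast
      define P2 where "P2 = filter_mset ?mid N2"
      have P2b: "set_mset P2 \<subseteq> {1..b-1}" unfolding P2_def by auto
      have sumN2: "sum_mset N2 = sum_mset P2 + int (count N2 b) * b"
        using arg_cong[OF dec2, of sum_mset] unfolding P2_def by simp
      have sizeN2: "size N2 = size P2 + count N2 b + count N2 0"
        using arg_cong[OF dec2, of size] unfolding P2_def by simp
      have nsmall: "n \<le> (b - 1) * (b - 1) - b"
      proof (cases "count N2 b \<ge> MM")
        case True
        define N3 where "N3 = P2 + replicate_mset (count N2 b - MM) b + replicate_mset (count N2 0) 0"
        have "set_mset N3 \<subseteq> A" unfolding N3_def using A0 Ab P2_def N2(1) by auto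
        moreover have "sum_mset N3 = n" unfolding N3_def using sumN2 N2(2) True
          by (simp add: of_nat_diff algebra_simps)
        moreover have "int (size N3) = k" unfolding N3_def using sizeN2 N2(3) True by simp
        ultimately have "(n, k) \<in> coneA A" using cone_of_mset[OF assms(1), of N3] by simp
        thus ?thesis using notc by simp
      next
        case False
        have "sum_mset P2 \<le> (b - 1) * int (size P2)" using sum_mset_bounds[OF P2b] by simp
        also have "\<dots> \<le> (b - 1) * (b - 1)"
          using N2(4) b1 unfolding P2_def by (intro mult_left_mono) auto
        finally have 1: "sum_mset P2 \<le> (b - 1) * (b - 1)" .
        have "int (count N2 b) * b \<le> (int MM - 1) * b"
          using False b1 by (intro mult_right_mono) auto
        thus ?thesis using 1 sumN2 N2(2) by (simp add: algebra_simps)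
      qed
      obtain Ng where Ng: "set_mset Ng \<subseteq> A" "sum_mset Ng = g" "int (size Ng) = h + int j"
        using mset_of_cone[OF assms(1) jc] by auto
      define N4 where "N4 = Ng + replicate_mset i b"
      have N4: "set_mset N4 \<subseteq> A" "sum_mset N4 = n" unfolding N4_def using Ng Ab im
        by (auto simp: algebra_simps)
      obtain N5 where N5: "set_mset N5 \<subseteq> A" "sum_mset N5 = n"
        "size (filter_mset ?mid N5) < nat b"
        using reduce[OF b1 AB A0 Ab N4(1)] N4 by auto
      have dec5: "N5 = filter_mset ?mid N5 + replicate_mset (count N5 b) b + replicate_mset (count N5 0) 0"
        using decomp[OF b1] N5(1) AB by blast
      define P5 where "P5 = filter_mset ?mid N5"
      have P5b: "set_mset P5 \<subseteq> {1..b-1}" unfolding P5_def by auto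
      have sumN5: "sum_mset N5 = sum_mset P5 + int (count N5 b) * b"
        using arg_cong[OF dec5, of sum_mset] unfolding P5_def by simp
      have "sum_mset P5 \<ge> 0" using sum_mset_bounds[OF P5b] by simp
      hence cb: "int (count N5 b) * b \<le> (b - 1) * (b - 1) - b" using sumN5 N5(2) nsmall by simp
      have cb5: "int (count N5 b) \<le> b - 3"
      proof (rule ccontr)
        assume "\<not> ?thesis"
        hence "(b - 2) * b \<le> int (count N5 b) * b" using b1 by (intro mult_right_mono) auto
        hence "b \<le> 1" using cb by (simp add: algebra_simps)
        hence "b = 1" using b1 by simp
        thus False using cb by simp
      qed
      have sP5: "int (size P5) \<le> b - 1" using N5(3) unfolding P5_def by simp
      define N6 where "N6 = P5 + replicate_mset (count N5 b) b + replicate_mset (nat k - size P5 - count N5 b) 0"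
      have "set_mset N6 \<subseteq> A" unfolding N6_def using A0 Ab P5_def N5(1) by auto
      moreover have "sum_mset N6 = n" unfolding N6_def using sumN5 N5(2) by simp
      moreover have "int (size N6) = k" unfolding N6_def using sP5 cb5 kbig by simp
      ultimately have "(n, k) \<in> coneA A" using cone_of_mset[OF assms(1), of N6] by simp
      thus False using notc by simp
    qed
  qed
qed

end
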